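(* Let $a$ be a regular scale factor with $\dot a(0^+)<\infty$, extended evenly to negative arguments, and fix $\tau>0$. Then the function $t_0\mapsto f(\tau,t_0)$ is continuously differentiable on $\{t_0: -\tau<t_0<\tau,\ t_0\neq0\}$, and \[ \partial_{t_0}f(\tau,t_0)=-\frac{a(t_0)\,\dot a(|t_0|)}{\sqrt{a^2(\tau)-a^2(t_0)}}\int_{|t_0|}^{\tau}\frac{\ddot a(t)}{\dot a(t)^2}\frac{dt}{\sqrt{a^2(\tau)-a^2(t)}}. \]
   Context: A function $a:[0,\infty)\to[0,\infty)$ is a regular scale factor if: (a) $a(0)=0$; (b) $a$ is increasing and continuous on $[0,\infty)$, twice continuously differentiable on $(0,\infty)$, with an inverse function on $[0,\infty)$; (c) $\frac{a(t)\ddot a(t)}{\dot a(t)^2}\le1$ for all $t>0$ (presupposing $\dot a(t)\ne0$). $\dot a(0^+)=\lim_{t\to0^+}\dot a(t)$. Extend $a$ by $a(-t)=a(t)$. For $0\le t_0<\tau$, \[ f(\tau,t_0)=\int_{t_0}^{\tau}\frac{\ddot a(t)}{\dot a(t)^2}\left(\frac{\sqrt{a^2(\tau)-a^2(t_0)}}{\sqrt{a^2(\tau)-a^2(t)}}-1\right)dt, \] and for $-\tau<t_0<0$, $f(\tau,t_0)=2f(\tau,0)-f(\tau,-t_0)$. *)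

theory Defs
  imports "HOL-Analysis.Analysis"
begin

text \<open>Regular scale factor (values of a on negative reals are irrelevant here;
  the even extension is imposed separately in the theorem).\<close>
definition regular_scale_factor :: "(real \<Rightarrow> real) \<Rightarrow> bool" where
  "regular_scale_factor a \<longleftrightarrow>
     a 0 = 0 \<and>
     (\<forall>t\<ge>0. a t \<ge> 0) \<and>
     strict_mono_on {0..} a \<and>
     inj_on a {0..} \<and>
     continuous_on {0..} a \<and>
     (\<forall>t>0. a differentiable (at t)) \<and>
     (\<forall>t>0. deriv a differentiable (at t)) \<and>
     continuous_on {0<..} (deriv (deriv a)) \<and>
     (\<forall>t>0. deriv a t \<noteq> 0) \<and>
     (\<forall>t>0. a t * deriv (deriv a) t / (deriv a t)^2 \<le> 1)"

text \<open>The function f(tau, t0) (Henstock-Kurzweil integral, which covers the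
  improper integrals involved).\<close>
definition sf_f0 :: "(real \<Rightarrow> real) \<Rightarrow> real \<Rightarrow> real \<Rightarrow> real" where
  "sf_f0 a \<tau> t0 = integral {t0..\<tau>}
     (\<lambda>t. deriv (deriv a) t / (deriv a t)^2 *
          (sqrt ((a \<tau>)^2 - (a t0)^2) / sqrt ((a \<tau>)^2 - (a t)^2) - 1))"

definition sf_f :: "(real \<Rightarrow> real) \<Rightarrow> real \<Rightarrow> real \<Rightarrow> real" where
  "sf_f a \<tau> t0 = (if 0 \<le> t0 then sf_f0 a \<tau> t0 else 2 * sf_f0 a \<tau> 0 - sf_f0 a \<tau> (- t0))"

end

theory Submission
  imports Defs
begin

lemma rsf_facts:
  assumes R: "regular_scale_factor a"
  shows rsf_da: "\<And>t. 0 < t \<Longrightarrow> (a has_real_derivative deriv a t) (at t)"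
    and rsf_cda: "\<And>t. 0 < t \<Longrightarrow> isCont (deriv a) t"
    and rsf_dda: "continuous_on {0<..} (deriv (deriv a))"
    and rsf_nz: "\<And>t. 0 < t \<Longrightarrow> deriv a t \<noteq> 0"
    and rsf_mono: "\<And>s t. 0 \<le> s \<Longrightarrow> s < t \<Longrightarrow> a s < a t"
    and rsf_pos: "\<And>t. 0 \<le> t \<Longrightarrow> 0 \<le> a t"
proof -
  show "\<And>t. 0 < t \<Longrightarrow> (a has_real_derivative deriv a t) (at t)"
    using R unfolding regular_scale_factor_def DERIV_deriv_iff_real_differentiable by blast
  show "\<And>t. 0 < t \<Longrightarrow> isCont (deriv a) t"
    using R unfolding regular_scale_factor_def by (simp add: differentiable_imp_continuous_within)
  show "continuous_on {0<..} (deriv (deriv a))" "\<And>t. 0 < t \<Longrightarrow> deriv a t \<noteq> 0"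
      "\<And>t. 0 \<le> t \<Longrightarrow> 0 \<le> a t"
    using R unfolding regular_scale_factor_def by auto
  show "\<And>s t. 0 \<le> s \<Longrightarrow> s < t \<Longrightarrow> a s < a t"
    using R unfolding regular_scale_factor_def strict_mono_on_def by auto
qed

lemma rsf_g_cont:
  assumes R: "regular_scale_factor a"
  shows "continuous_on {0<..} (\<lambda>t. deriv (deriv a) t / (deriv a t)^2)"
proof -
  have "continuous_on {0<..} (deriv a)"
    using rsf_cda[OF R] by (intro continuous_at_imp_continuous_on) auto
  then show ?thesis using rsf_dda[OF R] rsf_nz[OF R]
    by (intro continuous_intros) auto
qed

lemma rsf_a_cont:
  assumes R: "regular_scale_factor a"
  shows "continuous_on {0<..} a"
  using rsf_da[OF R] by (intro continuous_at_imp_continuous_on) (auto intro: DERIV_isCont)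


lemma core:
  assumes R: "regular_scale_factor a" and t0: "0 < t0" "t0 < \<tau>"
  defines "S \<equiv> \<lambda>t. sqrt ((a \<tau>)^2 - (a t)^2)"
      and "g \<equiv> \<lambda>t. deriv (deriv a) t / (deriv a t)^2"
  defines "h \<equiv> \<lambda>t. g t / S t"
  shows "((\<lambda>s. sf_f0 a \<tau> s) has_real_derivative
           (- (a t0 * deriv a t0) / S t0 * integral {t0..\<tau>} h)) (at t0)
       \<and> isCont (\<lambda>s. integral {s..\<tau>} h) t0"
proof -
  define l where "l = t0/2"
  define c where "c = (t0+\<tau>)/2"
  have lc: "0 < l" "l < t0" "t0 < c" "c < \<tau>" using t0 by (auto simp: l_def c_def)
  have Spos: "S t > 0" if "0 \<le> t" "t < \<tau>" for t
  proof -
    have "a t < a \<tau>" "0 \<le> a t" using rsf_mono[OF R] rsf_pos[OF R] that by auto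
    then have "(a t)^2 < (a \<tau>)^2" by (simp add: power_strict_mono)
    then show ?thesis by (simp add: S_def)
  qed
  have acont: "continuous_on {0<..} a" by (rule rsf_a_cont[OF R])
  have gcont: "continuous_on {0<..} g" unfolding g_def by (rule rsf_g_cont[OF R])
  have Scont: "continuous_on {0<..} S" unfolding S_def
    by (intro continuous_intros acont)
  have hcont: "continuous_on {l..c} h" unfolding h_def
  proof (rule continuous_on_divide)
    show "continuous_on {l..c} g" using gcont by (rule continuous_on_subset) (use lc in auto)
    show "continuous_on {l..c} S" using Scont by (rule continuous_on_subset) (use lc in auto)
    show "\<forall>x\<in>{l..c}. S x \<noteq> 0" by (smt (verit, best) Spos atLeastAtMost_iff lc)
  qed
  have gint: "g integrable_on {t..\<tau>}" if "l \<le> t" for t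
    using that lc by (intro integrable_continuous_interval continuous_on_subset[OF gcont]) auto
  have S0: "S t0 > 0" using Spos t0 by auto
  have dS: "(S has_real_derivative (- (a t0 * deriv a t0) / S t0)) (at t0)"
  proof -
    have d1: "((\<lambda>t. (a \<tau>)^2 - (a t)^2) has_real_derivative (- (2 * a t0 * deriv a t0))) (at t0)"
      using rsf_da[OF R t0(1)] by (auto intro!: derivative_eq_intros)
    have pos: "0 < (a \<tau>)^2 - (a t0)^2" using S0 unfolding S_def using real_sqrt_gt_0_iff by blast
    have "((\<lambda>t. sqrt ((a \<tau>)^2 - (a t)^2)) has_real_derivative
          inverse (sqrt ((a \<tau>)^2 - (a t0)^2)) / 2 * (- (2 * a t0 * deriv a t0))) (at t0)"
      by (rule DERIV_chain2[OF DERIV_real_sqrt[OF pos] d1])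
    then show ?thesis unfolding S_def by (simp add: field_simps)
  qed
  have open_lc: "open {l<..<c}" "t0 \<in> {l<..<c}" using lc by auto
  show ?thesis
  proof (cases "h integrable_on {c..\<tau>}")
    case True
    have hint: "h integrable_on {t..\<tau>}" if "l \<le> t" "t \<le> c" for t
    proof (rule Henstock_Kurzweil_Integration.integrable_combine[where a=t and c=c and b=\<tau>])
      show "h integrable_on {t..c}" using that
        by (intro integrable_continuous_interval continuous_on_subset[OF hcont]) auto
    qed (use that lc True in auto)
    have Ieq: "integral {t..\<tau>} h = integral {t..c} h + integral {c..\<tau>} h" if "l \<le> t" "t \<le> c" for t
      using Henstock_Kurzweil_Integration.integral_combine[OF that(2) _ hint[OF that]] lc by simp
    have Geq: "integral {t..\<tau>} g = integral {t..c} g + integral {c..\<tau>} g" if "l \<le> t" "t \<le> c" for t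
      using Henstock_Kurzweil_Integration.integral_combine[OF that(2) _ gint[OF that(1)]] lc by simp
    have feq: "sf_f0 a \<tau> t = S t * (integral {t..c} h + integral {c..\<tau>} h)
                 - (integral {t..c} g + integral {c..\<tau>} g)" if "t \<in> {l<..<c}" for t
    proof -
      have tt: "l \<le> t" "t \<le> c" using that by auto
      have pw: "(\<lambda>x. g x * (S t / S x - 1)) = (\<lambda>x. S t * h x - g x)"
        by (rule ext) (simp add: h_def divide_inverse algebra_simps)
      have "sf_f0 a \<tau> t = integral {t..\<tau>} (\<lambda>x. g x * (S t / S x - 1))"
        unfolding sf_f0_def S_def g_def by (rule refl)
      also have "\<dots> = integral {t..\<tau>} (\<lambda>x. S t * h x - g x)" by (simp only: pw)
      also have "\<dots> = S t * integral {t..\<tau>} h - integral {t..\<tau>} g"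
      proof -
        have i1: "(\<lambda>x. S t * h x) integrable_on {t..\<tau>}"
          using integrable_on_cmult_left[OF hint[OF tt], of "S t"] by simp
        have "integral {t..\<tau>} (\<lambda>x. S t * h x - g x)
              = integral {t..\<tau>} (\<lambda>x. S t * h x) - integral {t..\<tau>} g"
          by (rule Henstock_Kurzweil_Integration.integral_diff[OF i1 gint[OF tt(1)]])
        also have "integral {t..\<tau>} (\<lambda>x. S t * h x) = S t * integral {t..\<tau>} h"
          by (rule integral_mult[OF hint[OF tt], symmetric])
        finally show ?thesis .
      qed
      finally show ?thesis using Ieq[OF tt] Geq[OF tt] by simp
    qed
    have int0: "t0 \<in> interior {l..c}" using lc by simp
    have dI: "((\<lambda>t. integral {t..c} h) has_real_derivative - h t0) (at t0)"
      using integral_has_real_derivative'[OF hcont, of t0] lc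
      unfolding at_within_interior[OF int0] by simp
    have dG: "((\<lambda>t. integral {t..c} g) has_real_derivative - g t0) (at t0)"
    proof -
      have "continuous_on {l..c} g" using gcont by (rule continuous_on_subset) (use lc in auto)
      from integral_has_real_derivative'[OF this, of t0] lc show ?thesis
        unfolding at_within_interior[OF int0] by simp
    qed
    have dF: "((\<lambda>t. S t * (integral {t..c} h + integral {c..\<tau>} h)
                 - (integral {t..c} g + integral {c..\<tau>} g)) has_real_derivative
         (- (a t0 * deriv a t0) / S t0) * (integral {t0..c} h + integral {c..\<tau>} h)
          + (- h t0 + 0) * S t0 - (- g t0 + 0)) (at t0)"
      by (rule DERIV_diff[OF DERIV_mult[OF dS DERIV_add[OF dI DERIV_const]] DERIV_add[OF dG DERIV_const]])
    have val: "(- (a t0 * deriv a t0) / S t0) * (integral {t0..c} h + integral {c..\<tau>} h)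
          + (- h t0 + 0) * S t0 - (- g t0 + 0)
        = - (a t0 * deriv a t0) / S t0 * integral {t0..\<tau>} h"
      using Ieq[of t0] lc S0 by (simp add: h_def)
    have P1: "((\<lambda>s. sf_f0 a \<tau> s) has_real_derivative
           (- (a t0 * deriv a t0) / S t0 * integral {t0..\<tau>} h)) (at t0)"
      by (rule has_field_derivative_transform_within_open[OF dF[unfolded val] open_lc]) (simp add: feq)
    have "((\<lambda>t. integral {t..c} h + integral {c..\<tau>} h) has_real_derivative - h t0 + 0) (at t0)"
      by (rule DERIV_add[OF dI DERIV_const])
    then have "((\<lambda>t. integral {t..\<tau>} h) has_real_derivative - h t0 + 0) (at t0)"
    proof (rule has_field_derivative_transform_within_open[OF _ open_lc])
      fix x assume "x \<in> {l<..<c}"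
      then have "l \<le> x" "x \<le> c" by auto
      from Ieq[OF this] show "integral {x..c} h + integral {c..\<tau>} h = integral {x..\<tau>} h" by simp
    qed
    then have "isCont (\<lambda>s. integral {s..\<tau>} h) t0" by (rule DERIV_isCont)
    with P1 show ?thesis by simp
  next
    case False
    have hni: "\<not> h integrable_on {t..\<tau>}" if "t \<le> c" for t
      using False integrable_subinterval_real[of h t \<tau> c \<tau>] that lc by auto
    have z: "sf_f0 a \<tau> t = 0 \<and> integral {t..\<tau>} h = 0" if "t \<in> {l<..<c}" for t
    proof -
      have tt: "l \<le> t" "t \<le> c" "0 < t" "t < \<tau>" using that lc by auto
      have St: "S t > 0" using Spos tt by auto
      have "\<not> (\<lambda>x. g x * (S t / S x - 1)) integrable_on {t..\<tau>}"
      proof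
        assume k: "(\<lambda>x. g x * (S t / S x - 1)) integrable_on {t..\<tau>}"
        have "(\<lambda>x. (g x * (S t / S x - 1) + g x) / S t) integrable_on {t..\<tau>}"
          using integrable_add[OF k gint[OF tt(1)]] St by simp
        moreover have "(\<lambda>x. (g x * (S t / S x - 1) + g x) / S t) = h"
          using St by (auto simp: h_def field_simps)
        ultimately show False using hni[OF tt(2)] by simp
      qed
      then have "sf_f0 a \<tau> t = 0" unfolding sf_f0_def S_def g_def
        by (simp add: not_integrable_integral)
      then show ?thesis using hni[OF tt(2)] by (simp add: not_integrable_integral)
    qed
    have "((\<lambda>s. 0::real) has_real_derivative 0) (at t0)" by simp
    then have d0: "((\<lambda>s. sf_f0 a \<tau> s) has_real_derivative 0) (at t0)"
      by (rule has_field_derivative_transform_within_open[OF _ open_lc]) (simp add: z)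
    have "((\<lambda>s. integral {s..\<tau>} h) has_real_derivative 0) (at t0)"
      by (rule has_field_derivative_transform_within_open[OF DERIV_const open_lc]) (simp add: z)
    then have "isCont (\<lambda>s. integral {s..\<tau>} h) t0" by (rule DERIV_isCont)
    moreover have "integral {t0..\<tau>} h = 0" using z open_lc by auto
    ultimately show ?thesis using d0 by simp
  qed
qed


theorem lemma5p5:
  fixes a :: "real \<Rightarrow> real" and \<tau> L :: real
  assumes "regular_scale_factor a"
    and "(deriv a \<longlongrightarrow> L) (at_right 0)"
    and "\<forall>t. a (- t) = a t"
    and "\<tau> > 0"
  shows "(\<forall>t0\<in>{-\<tau><..<\<tau>} - {0}.
            ((\<lambda>s. sf_f a \<tau> s) has_real_derivative
               (- (a t0 * deriv a \<bar>t0\<bar>) / sqrt ((a \<tau>)^2 - (a t0)^2)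
                * integral {\<bar>t0\<bar>..\<tau>}
                    (\<lambda>t. deriv (deriv a) t / (deriv a t)^2 / sqrt ((a \<tau>)^2 - (a t)^2))))
             (at t0))
       \<and> continuous_on ({-\<tau><..<\<tau>} - {0})
           (\<lambda>t0. - (a t0 * deriv a \<bar>t0\<bar>) / sqrt ((a \<tau>)^2 - (a t0)^2)
                * integral {\<bar>t0\<bar>..\<tau>}
                    (\<lambda>t. deriv (deriv a) t / (deriv a t)^2 / sqrt ((a \<tau>)^2 - (a t)^2)))"
proof -
  note R = assms(1)
  define H where "H = (\<lambda>t. deriv (deriv a) t / (deriv a t)^2 / sqrt ((a \<tau>)^2 - (a t)^2))"
  define D0 where "D0 = (\<lambda>s. - (a s * deriv a s) / sqrt ((a \<tau>)^2 - (a s)^2) * integral {s..\<tau>} H)"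
  have C: "((\<lambda>s. sf_f0 a \<tau> s) has_real_derivative D0 u) (at u) \<and> isCont (\<lambda>s. integral {s..\<tau>} H) u"
    if "0 < u" "u < \<tau>" for u
    using core[OF R that] unfolding D0_def H_def by simp
  have ev: "a x = a \<bar>x\<bar>" for x 
  proof (cases "x \<ge> 0")
    case False
    then have "\<bar>x\<bar> = - x" by simp
    then show ?thesis using assms(3) by simp
  qed simp
  have E: "(\<lambda>t0. - (a t0 * deriv a \<bar>t0\<bar>) / sqrt ((a \<tau>)^2 - (a t0)^2)
                * integral {\<bar>t0\<bar>..\<tau>} H) = (\<lambda>x. D0 \<bar>x\<bar>)"
    by (rule ext) (simp add: D0_def ev[symmetric])
  have part1: "((\<lambda>s. sf_f a \<tau> s) has_real_derivative D0 \<bar>t0\<bar>) (at t0)"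
    if t0: "t0 \<in> {-\<tau><..<\<tau>} - {0}" for t0
  proof (cases "t0 > 0")
    case True
    then have "((\<lambda>s. sf_f0 a \<tau> s) has_real_derivative D0 t0) (at t0)" using C t0 by auto
    then have "((\<lambda>s. sf_f a \<tau> s) has_real_derivative D0 t0) (at t0)"
    proof (rule has_field_derivative_transform_within_open[where S="{0<..}"])
      show "open {0::real<..}" "t0 \<in> {0<..}" using True by auto
      show "\<And>x. x \<in> {0<..} \<Longrightarrow> sf_f0 a \<tau> x = sf_f a \<tau> x" by (simp add: sf_f_def)
    qed
    then show ?thesis using True by simp
  next
    case False
    define u where "u = - t0"
    have u: "0 < u" "u < \<tau>" using False t0 by (auto simp: u_def)
    have d1: "((\<lambda>s. sf_f0 a \<tau> (- s)) has_real_derivative D0 u * (- 1)) (at t0)"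
      using DERIV_chain2[OF conjunct1[OF C[OF u], unfolded u_def] DERIV_minus[OF DERIV_ident, of t0]]
      by (simp add: u_def)
    have "((\<lambda>s. 2 * sf_f0 a \<tau> 0 - sf_f0 a \<tau> (- s)) has_real_derivative 0 - D0 u * (- 1)) (at t0)"
      by (rule DERIV_diff[OF DERIV_const d1])
    then have "((\<lambda>s. sf_f a \<tau> s) has_real_derivative 0 - D0 u * (- 1)) (at t0)"
    proof (rule has_field_derivative_transform_within_open[where S="{..<0}"])
      show "open {..<0::real}" "t0 \<in> {..<0}" using False t0 by auto
      show "\<And>x. x \<in> {..<0} \<Longrightarrow> 2 * sf_f0 a \<tau> 0 - sf_f0 a \<tau> (- x) = sf_f a \<tau> x"
        by (simp add: sf_f_def)
    qed
    then show ?thesis using False by (simp add: u_def)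
  qed
  have part2: "isCont (\<lambda>x. D0 \<bar>x\<bar>) x" if x: "x \<in> {-\<tau><..<\<tau>} - {0}" for x
  proof (rule isCont_o2[where f=abs])
    show "isCont abs x" by (intro continuous_intros)
    define u where "u = \<bar>x\<bar>"
    have u: "0 < u" "u < \<tau>" using x by (auto simp: u_def)
    have Su: "0 < (a \<tau>)^2 - (a u)^2"
    proof -
      have "a u < a \<tau>" "0 \<le> a u" using rsf_mono[OF R] rsf_pos[OF R] u by auto
      then show ?thesis by (simp add: power_strict_mono)
    qed
    have ca: "isCont a u" using rsf_da[OF R u(1)] by (rule DERIV_isCont)
    have cda: "isCont (deriv a) u" using rsf_cda[OF R u(1)] .
    have cI: "isCont (\<lambda>s. integral {s..\<tau>} H) u" using C[OF u] by simp
    have "isCont D0 u" unfolding D0_def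
      using Su by (intro continuous_intros ca cda cI) auto
    then show "isCont D0 \<bar>x\<bar>" by (simp add: u_def)
  qed
  have E': "(\<lambda>t0. - (a t0 * deriv a \<bar>t0\<bar>) / sqrt ((a \<tau>)^2 - (a t0)^2)
                * integral {\<bar>t0\<bar>..\<tau>}
                    (\<lambda>t. deriv (deriv a) t / (deriv a t)^2 / sqrt ((a \<tau>)^2 - (a t)^2)))
           = (\<lambda>x. D0 \<bar>x\<bar>)"
    using E unfolding H_def .
  have Ex: "- (a t0 * deriv a \<bar>t0\<bar>) / sqrt ((a \<tau>)^2 - (a t0)^2)
                * integral {\<bar>t0\<bar>..\<tau>}
                    (\<lambda>t. deriv (deriv a) t / (deriv a t)^2 / sqrt ((a \<tau>)^2 - (a t)^2))
           = D0 \<bar>t0\<bar>" for t0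
    using fun_cong[OF E', of t0] by simp
  show ?thesis
    unfolding E' Ex
  proof
    show "\<forall>t0\<in>{-\<tau><..<\<tau>} - {0}. ((\<lambda>s. sf_f a \<tau> s) has_real_derivative D0 \<bar>t0\<bar>) (at t0)"
      using part1 by blast
    show "continuous_on ({-\<tau><..<\<tau>} - {0}) (\<lambda>x. D0 \<bar>x\<bar>)"
      using part2 by (intro continuous_at_imp_continuous_on) blast
  qed
qed


end
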